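(* Let $X=(X_t)_{t\ge0}$ be a Markov diffusion process in $\mathbb{R}^d$ with $X_0=x$, whose transition probabilities satisfy $\mathbb{P}[X_t\in dy\mid X_s=z]=p(s,z;t,y)dy$ for $z,y\in\mathbb{R}^d$, $0<s<t<\infty$, with $p(s,z;t,y)\le\kappa_1(2\pi\kappa_2(t-s))^{-d/2}\exp\big[-\frac{|y-z|^2}{2\kappa_2(t-s)}\big]$ for all $z,y$, $s<t$, where $\kappa_1,\kappa_2>0$ are constants. Let $B$ be a $d$-dimensional standard Brownian motion with $B_0=x$. Then for every $F=f(X_{t_1},\dots,X_{t_n})\in\mathcal{C}_n$ with $f\ge0$, $\mathbb{E}[f(X_{t_1},\dots,X_{t_n})]\le\kappa_1^n\,\mathbb{E}[f(B_{\kappa_2t_1},\dots,B_{\kappa_2t_n})]$.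
   Context: $\mathcal{C}_n$ is the set of cylindrical functionals $F=f(X_{t_1},\dots,X_{t_n})$ with $0<t_1,\dots,t_n<\infty$ and $f:\mathbb{R}^{nd}\to\mathbb{R}$ such that $\int_{D}|f(y_1,\dots,y_n)|dy_1\cdots dy_n$ is finite for every bounded domain $D\subset\mathbb{R}^{nd}$ and $f$ has polynomial growth. *)

theory Defs
  imports "HOL-Probability.Probability"
begin

definition gauss_kernel :: "real \<Rightarrow> real^'d \<Rightarrow> real^'d \<Rightarrow> real" where
  "gauss_kernel c z y =
     (2 * pi * c) powr (- real CARD('d) / 2) * exp (- (norm (y - z))\<^sup>2 / (2 * c))"

definition natural_filtration ::
  "'w measure \<Rightarrow> (real \<Rightarrow> 'w \<Rightarrow> real^'d) \<Rightarrow> real \<Rightarrow> 'w measure" where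
  "natural_filtration M X s =
     sigma (space M) {X u -` A \<inter> space M | u A. u \<in> {0..s} \<and> A \<in> sets (borel :: (real^'d) measure)}"

text \<open>Markov diffusion process started at x (continuous paths, X 0 = x a.s.)
  whose transition probabilities have densities p:
  P[X_t in A | F_s] = int_A p(s, X_s; t, y) dy for 0 < s < t, written out via the
  defining property of conditional probability w.r.t. the natural filtration.\<close>
definition markov_diffusion_with_density ::
  "'w measure \<Rightarrow> (real \<Rightarrow> 'w \<Rightarrow> real^'d) \<Rightarrow> real^'d
     \<Rightarrow> (real \<Rightarrow> real^'d \<Rightarrow> real \<Rightarrow> real^'d \<Rightarrow> real) \<Rightarrow> bool" where
  "markov_diffusion_with_density M X x p \<longleftrightarrow>
     prob_space M \<and>
     (\<forall>t. X t \<in> borel_measurable M) \<and>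
     (AE \<omega> in M. X 0 \<omega> = x) \<and>
     (AE \<omega> in M. continuous_on {0..} (\<lambda>t. X t \<omega>)) \<and>
     (\<forall>s z t y. p s z t y \<ge> 0) \<and>
     (\<forall>s z t. (\<lambda>y. p s z t y) \<in> borel_measurable borel) \<and>
     (\<forall>s t A G. 0 < s \<longrightarrow> s < t \<longrightarrow> A \<in> sets borel \<longrightarrow>
        G \<in> sets (natural_filtration M X s) \<longrightarrow>
        emeasure M ({\<omega> \<in> space M. X t \<omega> \<in> A} \<inter> G)
          = (\<integral>\<^sup>+ \<omega>. indicator G \<omega> * (\<integral>\<^sup>+ y. indicator A y * ennreal (p s (X s \<omega>) t y) \<partial>lborel) \<partial>M))"

definition std_brownian_motion ::
  "'w measure \<Rightarrow> (real \<Rightarrow> 'w \<Rightarrow> real^'d) \<Rightarrow> real^'d \<Rightarrow> bool" where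
  "std_brownian_motion N B x \<longleftrightarrow>
     prob_space N \<and>
     (\<forall>t. B t \<in> borel_measurable N) \<and>
     (AE \<omega> in N. B 0 \<omega> = x) \<and>
     (AE \<omega> in N. continuous_on {0..} (\<lambda>t. B t \<omega>)) \<and>
     (\<forall>s t. 0 \<le> s \<longrightarrow> s < t \<longrightarrow>
        distributed N lborel (\<lambda>\<omega>. B t \<omega> - B s \<omega>) (\<lambda>y. ennreal (gauss_kernel (t - s) 0 y))) \<and>
     (\<forall>(ts :: nat \<Rightarrow> real) m. 0 \<le> ts 0 \<longrightarrow> (\<forall>i<m. ts i \<le> ts (Suc i)) \<longrightarrow>
        prob_space.indep_vars N (\<lambda>_. borel) (\<lambda>i \<omega>. B (ts (Suc i)) \<omega> - B (ts i) \<omega>) {..<m})"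

definition cylindrical_fun :: "nat \<Rightarrow> ((nat \<Rightarrow> real^'d) \<Rightarrow> real) \<Rightarrow> bool" where
  "cylindrical_fun n f \<longleftrightarrow>
     f \<in> borel_measurable (PiM {..<n} (\<lambda>_. borel :: (real^'d) measure)) \<and>
     (\<forall>D \<in> sets (PiM {..<n} (\<lambda>_. lborel :: (real^'d) measure)).
        (\<exists>R. \<forall>y\<in>D. \<forall>i<n. norm (y i) \<le> R) \<longrightarrow>
        (\<integral>\<^sup>+ y. indicator D y * ennreal \<bar>f y\<bar> \<partial>(PiM {..<n} (\<lambda>_. lborel))) < \<infinity>) \<and>
     (\<exists>C (k::nat). \<forall>y \<in> PiE {..<n} (\<lambda>_. UNIV).
        \<bar>f y\<bar> \<le> C * (1 + (\<Sum>i<n. norm (y i))) ^ k)"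

end

theory Submission
  imports Defs
begin

lemma semiring_pair_rect:
  "semiring_of_sets (space A \<times> space B) {a \<times> b | a b. a \<in> sets A \<and> b \<in> sets B}"
proof
  show "{a \<times> b |a b. a \<in> sets A \<and> b \<in> sets B} \<subseteq> Pow (space A \<times> space B)"
  proof
    fix x assume "x \<in> {a \<times> b |a b. a \<in> sets A \<and> b \<in> sets B}"
    then obtain a b where "x = a \<times> b" "a \<in> sets A" "b \<in> sets B" by blast
    then show "x \<in> Pow (space A \<times> space B)"
      using sets.sets_into_space[of a A] sets.sets_into_space[of b B] by auto
  qed
  show "{} \<in> {a \<times> b |a b. a \<in> sets A \<and> b \<in> sets B}"
    by (intro CollectI exI[of _ "{}"]) auto
next
  fix x y assume "x \<in> {a \<times> b |a b. a \<in> sets A \<and> b \<in> sets B}" "y \<in> {a \<times> b |a b. a \<in> sets A \<and> b \<in> sets B}"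
  then obtain a b c d where xy: "x = a \<times> b" "y = c \<times> d" "a \<in> sets A" "b \<in> sets B" "c \<in> sets A" "d \<in> sets B" by blast
  have "x \<inter> y = (a \<inter> c) \<times> (b \<inter> d)" using xy by auto
  then show "x \<inter> y \<in> {a \<times> b |a b. a \<in> sets A \<and> b \<in> sets B}"
    using xy by blast
  have e: "x - y = \<Union>{(a - c) \<times> b, (a \<inter> c) \<times> (b - d)}" using xy by auto
  have d: "disjoint {(a - c) \<times> b, (a \<inter> c) \<times> (b - d)}"
    unfolding disjoint_def by auto
  have s: "{(a - c) \<times> b, (a \<inter> c) \<times> (b - d)} \<subseteq> {a \<times> b |a b. a \<in> sets A \<and> b \<in> sets B}"
    using xy by blast
  show "\<exists>C\<subseteq>{a \<times> b |a b. a \<in> sets A \<and> b \<in> sets B}. finite C \<and> disjoint C \<and> x - y = \<Union> C"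
    using e d s by blast
qed

lemma le_on_semiring:
  assumes sr: "semiring_of_sets \<Omega> G" and \<Omega>: "\<Omega> \<in> G"
    and s1: "sets M1 = sigma_sets \<Omega> G" and s2: "sets M2 = sigma_sets \<Omega> G"
    and f1: "finite_measure M1" and f2: "finite_measure M2"
    and le: "\<And>A. A \<in> G \<Longrightarrow> emeasure M1 A \<le> emeasure M2 A"
    and X: "X \<in> sets M1"
  shows "emeasure M1 X \<le> emeasure M2 X"
proof -
  interpret semiring_of_sets \<Omega> G by fact
  interpret F1: finite_measure M1 by fact
  interpret F2: finite_measure M2 by fact
  have GS: "\<And>A. A \<in> G \<Longrightarrow> A \<in> sets M1" "\<And>A. A \<in> G \<Longrightarrow> A \<in> sets M2"
    using s1 s2 by auto
  define \<mu> where "\<mu> A = emeasure M2 A - emeasure M1 A" for A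
  have pos: "positive G \<mu>" unfolding positive_def \<mu>_def by simp
  have ca: "countably_additive G \<mu>"
    unfolding countably_additive_def
  proof safe
    fix A :: "nat \<Rightarrow> _" assume A: "range A \<subseteq> G" "disjoint_family A" "\<Union> (range A) \<in> G"
    have A1: "range A \<subseteq> sets M1" "range A \<subseteq> sets M2" using A GS by auto
    have e1: "(\<Sum>i. emeasure M1 (A i)) = emeasure M1 (\<Union> (range A))"
      using A1 A by (intro suminf_emeasure) auto
    have e2: "(\<Sum>i. emeasure M2 (A i)) = emeasure M2 (\<Union> (range A))"
      using A1 A by (intro suminf_emeasure) auto
    have "(\<Sum>i. \<mu> (A i)) + (\<Sum>i. emeasure M1 (A i)) = (\<Sum>i. \<mu> (A i) + emeasure M1 (A i))"
      by (intro suminf_add summableI)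
    also have "\<dots> = (\<Sum>i. emeasure M2 (A i))"
      unfolding \<mu>_def using A le
      by (intro suminf_cong diff_add_cancel_ennreal) auto
    finally have "(\<Sum>i. \<mu> (A i)) + emeasure M1 (\<Union> (range A)) = emeasure M2 (\<Union> (range A))"
      using e1 e2 by simp
    then show "(\<Sum>i. \<mu> (A i)) = \<mu> (\<Union> (range A))"
      unfolding \<mu>_def by (metis F1.emeasure_finite ennreal_add_diff_cancel_right)
  qed
  obtain \<mu>' where \<mu>': "\<forall>s\<in>G. \<mu>' s = \<mu> s" "measure_space \<Omega> (sigma_sets \<Omega> G) \<mu>'"
    using caratheodory[OF pos ca] by blast
  have sa: "sigma_algebra \<Omega> (sigma_sets \<Omega> G)"
    using sigma_algebra_sigma_sets[OF space_closed] .
  define \<nu> where "\<nu> A = emeasure M1 A + \<mu>' A" for A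
  have posn: "positive (sigma_sets \<Omega> G) \<nu>"
    using \<mu>'(2) unfolding \<nu>_def positive_def measure_space_def by (simp add: s1[symmetric])
  have can: "countably_additive (sigma_sets \<Omega> G) \<nu>"
    unfolding countably_additive_def
  proof safe
    fix A :: "nat \<Rightarrow> _" assume A: "range A \<subseteq> sigma_sets \<Omega> G" "disjoint_family A" "\<Union> (range A) \<in> sigma_sets \<Omega> G"
    have "(\<Sum>i. \<nu> (A i)) = (\<Sum>i. emeasure M1 (A i)) + (\<Sum>i. \<mu>' (A i))"
      unfolding \<nu>_def by (intro suminf_add[symmetric] summableI)
    also have "(\<Sum>i. emeasure M1 (A i)) = emeasure M1 (\<Union> (range A))"
      using A s1 by (intro suminf_emeasure) auto
    also have "(\<Sum>i. \<mu>' (A i)) = \<mu>' (\<Union> (range A))"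
      using \<mu>'(2) A unfolding measure_space_def countably_additive_def by auto
    finally show "(\<Sum>i. \<nu> (A i)) = \<nu> (\<Union> (range A))" unfolding \<nu>_def .
  qed
  define N where "N = measure_of \<Omega> (sigma_sets \<Omega> G) \<nu>"
  have eN: "emeasure N A = \<nu> A" if "A \<in> sigma_sets \<Omega> G" for A
    unfolding N_def by (rule emeasure_measure_of_sigma[OF sa posn can that])
  have sN: "sets N = sigma_sets \<Omega> G"
    unfolding N_def using sa by (simp add: sigma_algebra.sets_measure_of_eq)
  have "N = M2"
  proof (rule measure_eqI_generator_eq[of G \<Omega> N M2 "\<lambda>_. \<Omega>"])
    show "Int_stable G" by (auto simp: Int_stable_def)
    show "G \<subseteq> Pow \<Omega>" by (rule space_closed)
    fix A assume "A \<in> G"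
    then show "emeasure N A = emeasure M2 A"
      using eN[of A] \<mu>'(1) le[of A] unfolding \<nu>_def \<mu>_def
      by (simp add: add.commute diff_add_cancel_ennreal)
  next
    show "emeasure N \<Omega> \<noteq> \<infinity>"
      using eN[of \<Omega>] \<Omega> \<mu>'(1) le[of \<Omega>] unfolding \<nu>_def \<mu>_def
      by (simp add: add.commute diff_add_cancel_ennreal)
  qed (use sN s2 \<Omega> in auto)
  then have "emeasure M2 X = emeasure M1 X + \<mu>' X"
    using eN[of X] X s1 unfolding \<nu>_def by auto
  then show ?thesis by simp
qed

lemma gauss_nonneg: "0 \<le> gauss_kernel c z y"
  unfolding gauss_kernel_def by simp

lemma gauss_shift: "gauss_kernel c z y = gauss_kernel c 0 (y - z)"
  unfolding gauss_kernel_def by simp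

lemma gauss_measurable[measurable]:
  "(\<lambda>(z::real^'d, y). gauss_kernel c z y) \<in> borel_measurable (borel \<Otimes>\<^sub>M borel)"
  unfolding gauss_kernel_def by measurable

lemma gauss_measurable'[measurable]:
  assumes [measurable]: "f \<in> measurable M borel" "g \<in> measurable M borel"
  shows "(\<lambda>x. gauss_kernel c (f x :: real^'d) (g x)) \<in> borel_measurable M"
  unfolding gauss_kernel_def by measurable

lemma gauss_measurable_lborel[measurable]:
  "(\<lambda>y. gauss_kernel c (z::real^'d) y) \<in> borel_measurable lborel"
  by simp

lemma lborel_shift:
  fixes z :: "'a::euclidean_space"
  assumes [measurable]: "f \<in> borel_measurable borel"
  shows "(\<integral>\<^sup>+ y. f y \<partial>lborel) = (\<integral>\<^sup>+ u. f (z + u) \<partial>lborel)"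
proof -
  have "(\<integral>\<^sup>+ y. f y \<partial>lborel) = (\<integral>\<^sup>+ y. f y \<partial>(distr lborel borel ((+) z)))"
    by (simp add: lborel_distr_plus)
  also have "\<dots> = (\<integral>\<^sup>+ u. f (z + u) \<partial>lborel)"
    by (subst nn_integral_distr) auto
  finally show ?thesis .
qed

lemma gauss_int_one:
  fixes B :: "real \<Rightarrow> 'v \<Rightarrow> real^'d" and z :: "real^'d"
  assumes bm: "std_brownian_motion N B x" and c: "0 < c"
  shows "(\<integral>\<^sup>+ y. ennreal (gauss_kernel c z y) \<partial>lborel) = 1"
proof -
  have P: "prob_space N" using bm unfolding std_brownian_motion_def by blast
  have d: "distributed N lborel (\<lambda>\<omega>. B c \<omega> - B 0 \<omega>) (\<lambda>y. ennreal (gauss_kernel c 0 y))"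
  proof -
    have "\<forall>s t. 0 \<le> s \<longrightarrow> s < t \<longrightarrow>
        distributed N lborel (\<lambda>\<omega>. B t \<omega> - B s \<omega>) (\<lambda>y. ennreal (gauss_kernel (t - s) 0 y))"
      using bm unfolding std_brownian_motion_def by blast
    from this[rule_format, of 0 c] c show ?thesis by simp
  qed
  then have m: "(\<lambda>\<omega>. B c \<omega> - B 0 \<omega>) \<in> measurable N lborel"
    and e: "distr N lborel (\<lambda>\<omega>. B c \<omega> - B 0 \<omega>) = density lborel (\<lambda>y. ennreal (gauss_kernel c 0 y))"
    unfolding distributed_def by blast+
  have "(\<integral>\<^sup>+ y. ennreal (gauss_kernel c 0 (y::real^'d)) \<partial>lborel) = emeasure (density lborel (\<lambda>y::real^'d. ennreal (gauss_kernel c 0 y))) UNIV"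
    by (subst emeasure_density) auto
  also have "\<dots> = emeasure (distr N lborel (\<lambda>\<omega>. B c \<omega> - B 0 \<omega>)) UNIV"
    using e by simp
  also have "\<dots> = emeasure N (space N)"
    using m by (subst emeasure_distr) auto
  also have "\<dots> = 1" using P by (simp add: prob_space.emeasure_space_1)
  finally have one: "(\<integral>\<^sup>+ y. ennreal (gauss_kernel c 0 (y::real^'d)) \<partial>lborel) = 1" .
  have "(\<integral>\<^sup>+ y. ennreal (gauss_kernel c z y) \<partial>lborel) = (\<integral>\<^sup>+ u. ennreal (gauss_kernel c z (z + u)) \<partial>lborel)"
    by (rule lborel_shift) measurable
  also have "\<dots> = (\<integral>\<^sup>+ u. ennreal (gauss_kernel c 0 (u::real^'d)) \<partial>lborel)"
    by (subst gauss_shift) simp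
  finally show ?thesis using one by simp
qed

locale setting =
  fixes M :: "'w measure" and X :: "real \<Rightarrow> 'w \<Rightarrow> real^'d" and x :: "real^'d"
    and p :: "real \<Rightarrow> real^'d \<Rightarrow> real \<Rightarrow> real^'d \<Rightarrow> real"
    and \<kappa>1 \<kappa>2 :: real
    and N :: "'v measure" and B :: "real \<Rightarrow> 'v \<Rightarrow> real^'d"
  assumes mk: "markov_diffusion_with_density M X x p"
    and k1: "\<kappa>1 > 0" and k2: "\<kappa>2 > 0"
    and pb: "\<And>s t z y. 0 < s \<Longrightarrow> s < t \<Longrightarrow> p s z t y \<le> \<kappa>1 * gauss_kernel (\<kappa>2 * (t - s)) z y"
    and bm: "std_brownian_motion N B x"
begin

lemma PM: "prob_space M" using mk unfolding markov_diffusion_with_density_def by (elim conjE) assumption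
lemma Xm[measurable]: "X t \<in> borel_measurable M"
proof -
  have "\<forall>t. X t \<in> borel_measurable M" using mk unfolding markov_diffusion_with_density_def by (elim conjE) assumption
  then show ?thesis by blast
qed
lemma X0: "AE \<omega> in M. X 0 \<omega> = x" using mk unfolding markov_diffusion_with_density_def by (elim conjE) assumption
lemma Xcont: "AE \<omega> in M. continuous_on {0..} (\<lambda>t. X t \<omega>)" using mk unfolding markov_diffusion_with_density_def by (elim conjE) assumption
lemma p_nonneg: "p s z t y \<ge> 0"
proof -
  have "\<forall>s z t y. p s z t y \<ge> 0" using mk unfolding markov_diffusion_with_density_def by (elim conjE) assumption
  then show ?thesis by blast
qed
lemma markov_eq:
  assumes "0 < s" "s < t" "A \<in> sets borel" "G \<in> sets (natural_filtration M X s)"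
  shows "emeasure M ({\<omega> \<in> space M. X t \<omega> \<in> A} \<inter> G)
          = (\<integral>\<^sup>+ \<omega>. indicator G \<omega> * (\<integral>\<^sup>+ y. indicator A y * ennreal (p s (X s \<omega>) t y) \<partial>lborel) \<partial>M)"
proof -
  have "\<forall>s t A G. 0 < s \<longrightarrow> s < t \<longrightarrow> A \<in> sets borel \<longrightarrow>
        G \<in> sets (natural_filtration M X s) \<longrightarrow>
        emeasure M ({\<omega> \<in> space M. X t \<omega> \<in> A} \<inter> G)
          = (\<integral>\<^sup>+ \<omega>. indicator G \<omega> * (\<integral>\<^sup>+ y. indicator A y * ennreal (p s (X s \<omega>) t y) \<partial>lborel) \<partial>M)"
    using mk unfolding markov_diffusion_with_density_def by (elim conjE) assumption
  then show ?thesis using assms by blast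
qed

lemma space_filt: "space (natural_filtration M X s) = space M"
  unfolding natural_filtration_def by (rule space_measure_of) blast

lemma sets_filt: "sets (natural_filtration M X s) = sigma_sets (space M) {X u -` A \<inter> space M | u A. u \<in> {0..s} \<and> A \<in> sets (borel :: (real^'d) measure)}"
  unfolding natural_filtration_def by (rule sets_measure_of) blast

lemma filt_meas:
  assumes "0 \<le> u" "u \<le> s"
  shows "X u \<in> measurable (natural_filtration M X s) borel"
proof (rule measurableI)
  fix A :: "(real^'d) set" assume "A \<in> sets borel"
  then have "X u -` A \<inter> space M \<in> {X u -` A \<inter> space M | u A. u \<in> {0..s} \<and> A \<in> sets (borel :: (real^'d) measure)}"
    by (intro CollectI exI[of _ u] exI[of _ A] conjI refl) (use assms in simp_all)
  then show "X u -` A \<inter> space (natural_filtration M X s) \<in> sets (natural_filtration M X s)"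
    unfolding space_filt sets_filt by (rule sigma_sets.Basic)
qed (simp add: space_filt)

lemma pb_enn:
  assumes "0 < s" "s < t"
  shows "ennreal (p s z t y) \<le> ennreal \<kappa>1 * ennreal (gauss_kernel (\<kappa>2 * (t - s)) z y)"
proof -
  have "ennreal (p s z t y) \<le> ennreal (\<kappa>1 * gauss_kernel (\<kappa>2 * (t - s)) z y)"
    by (rule ennreal_leI) (rule pb[OF assms])
  also have "\<dots> = ennreal \<kappa>1 * ennreal (gauss_kernel (\<kappa>2 * (t - s)) z y)"
    by (rule ennreal_mult) (use k1 gauss_nonneg in auto)
  finally show ?thesis .
qed

lemma step_markov:
  fixes S :: "'s measure" and Y :: "'w \<Rightarrow> 's"
  assumes st: "0 < s" "s < t"
    and Ym[measurable]: "Y \<in> measurable M S" and Yf: "Y \<in> measurable (natural_filtration M X s) S"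
    and \<pi>m[measurable]: "\<pi> \<in> borel_measurable S" and \<pi>Y: "\<And>\<omega>. \<omega> \<in> space M \<Longrightarrow> \<pi> (Y \<omega>) = X s \<omega>"
    and hm: "h \<in> borel_measurable (S \<Otimes>\<^sub>M borel)"
  shows "(\<integral>\<^sup>+ \<omega>. h (Y \<omega>, X t \<omega>) \<partial>M)
     \<le> ennreal \<kappa>1 * (\<integral>\<^sup>+ \<omega>. \<integral>\<^sup>+ y. h (Y \<omega>, y) * ennreal (gauss_kernel (\<kappa>2 * (t - s)) (X s \<omega>) y) \<partial>lborel \<partial>M)"
proof -
  interpret P: prob_space M by (rule PM)
  define c where "c = \<kappa>2 * (t - s)"
  have c: "0 < c" unfolding c_def using k2 st by simp
  have sl: "sets (S \<Otimes>\<^sub>M lborel) = sets (S \<Otimes>\<^sub>M borel)"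
    by (rule sets_pair_measure_cong) auto
  have hm'[measurable]: "h \<in> borel_measurable (S \<Otimes>\<^sub>M lborel)"
    using hm by (simp add: measurable_cong_sets[OF sl refl])
  define D where "D = distr M S Y"
  interpret D: prob_space D unfolding D_def by (rule P.prob_space_distr) simp
  define f where "f = (\<lambda>(z, y). ennreal \<kappa>1 * ennreal (gauss_kernel c (\<pi> z) y))"
  have fm[measurable]: "f \<in> borel_measurable (S \<Otimes>\<^sub>M lborel)"
    unfolding f_def by measurable
  define \<nu>1 where "\<nu>1 = distr M (S \<Otimes>\<^sub>M lborel) (\<lambda>\<omega>. (Y \<omega>, X t \<omega>))"
  define \<nu>2 where "\<nu>2 = density (D \<Otimes>\<^sub>M lborel) f"
  have sD: "sets (D \<Otimes>\<^sub>M lborel) = sets (S \<Otimes>\<^sub>M lborel)"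
    unfolding D_def by (rule sets_pair_measure_cong) auto
  have s1: "sets \<nu>1 = sigma_sets (space S \<times> space lborel) {a \<times> b | a b. a \<in> sets S \<and> b \<in> sets lborel}"
    unfolding \<nu>1_def by (simp add: sets_pair_measure)
  have s2: "sets \<nu>2 = sigma_sets (space S \<times> space lborel) {a \<times> b | a b. a \<in> sets S \<and> b \<in> sets lborel}"
    unfolding \<nu>2_def using sD by (simp add: sets_pair_measure)
  have int_fst: "(\<integral>\<^sup>+ q. F q \<partial>(D \<Otimes>\<^sub>M lborel)) = (\<integral>\<^sup>+ \<omega>. \<integral>\<^sup>+ y. F (Y \<omega>, y) \<partial>lborel \<partial>M)"
    if [measurable]: "F \<in> borel_measurable (S \<Otimes>\<^sub>M lborel)" for F
  proof -
    have Fm: "F \<in> borel_measurable (D \<Otimes>\<^sub>M lborel)"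
      using that by (simp add: measurable_cong_sets[OF sD refl])
    have "(\<integral>\<^sup>+ q. F q \<partial>(D \<Otimes>\<^sub>M lborel)) = (\<integral>\<^sup>+ z. \<integral>\<^sup>+ y. F (z, y) \<partial>lborel \<partial>D)"
      by (rule lborel.nn_integral_fst[symmetric, OF Fm])
    also have "\<dots> = (\<integral>\<^sup>+ \<omega>. \<integral>\<^sup>+ y. F (Y \<omega>, y) \<partial>lborel \<partial>M)"
      unfolding D_def by (subst nn_integral_distr) auto
    finally show ?thesis .
  qed
  have fin1: "finite_measure \<nu>1"
    unfolding \<nu>1_def by (rule prob_space.finite_measure, rule P.prob_space_distr) simp
  have tot2: "emeasure \<nu>2 (space \<nu>2) = ennreal \<kappa>1"
  proof -
    have "emeasure \<nu>2 (space \<nu>2) = (\<integral>\<^sup>+ q. f q \<partial>(D \<Otimes>\<^sub>M lborel))"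
      unfolding \<nu>2_def using fm by (subst emeasure_density) (auto intro!: nn_integral_cong simp: space_pair_measure measurable_cong_sets[OF sD refl])
    also have "\<dots> = (\<integral>\<^sup>+ \<omega>. \<integral>\<^sup>+ y. f (Y \<omega>, y) \<partial>lborel \<partial>M)"
      by (rule int_fst) (rule fm)
    also have "\<dots> = (\<integral>\<^sup>+ \<omega>. ennreal \<kappa>1 \<partial>M)"
      unfolding f_def
      by (intro nn_integral_cong) (simp add: nn_integral_cmult gauss_int_one[OF bm c])
    also have "\<dots> = ennreal \<kappa>1" by (simp add: P.emeasure_space_1)
    finally show ?thesis .
  qed
  have fin2: "finite_measure \<nu>2"
    by (rule finite_measureI) (simp add: tot2)
  have le: "emeasure \<nu>1 A \<le> emeasure \<nu>2 A" if A: "A \<in> {a \<times> b | a b. a \<in> sets S \<and> b \<in> sets lborel}" for A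
  proof -
    obtain a b where ab: "A = a \<times> b" "a \<in> sets S" "b \<in> sets lborel" using A by blast
    define G where "G = Y -` a \<inter> space M"
    have Gf: "G \<in> sets (natural_filtration M X s)"
      using measurable_sets[OF Yf ab(2)] unfolding G_def space_filt .
    have bb[measurable]: "b \<in> sets borel" using ab by simp
    have As: "A \<in> sets (S \<Otimes>\<^sub>M lborel)" using ab by (simp add: pair_measureI)
    have "emeasure \<nu>1 A = emeasure M ({\<omega> \<in> space M. X t \<omega> \<in> b} \<inter> G)"
      unfolding \<nu>1_def ab G_def
      using As unfolding ab by (subst emeasure_distr) (auto intro!: arg_cong[where f="emeasure M"])
    also have "\<dots> = (\<integral>\<^sup>+ \<omega>. indicator G \<omega> * (\<integral>\<^sup>+ y. indicator b y * ennreal (p s (X s \<omega>) t y) \<partial>lborel) \<partial>M)"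
      by (rule markov_eq[OF st bb Gf])
    also have "\<dots> \<le> (\<integral>\<^sup>+ \<omega>. indicator G \<omega> * (\<integral>\<^sup>+ y. indicator b y * (ennreal \<kappa>1 * ennreal (gauss_kernel c (X s \<omega>) y)) \<partial>lborel) \<partial>M)"
      unfolding c_def
      by (intro nn_integral_mono mult_left_mono) (auto simp: pb_enn st)
    also have "\<dots> = (\<integral>\<^sup>+ \<omega>. \<integral>\<^sup>+ y. f (Y \<omega>, y) * indicator A (Y \<omega>, y) \<partial>lborel \<partial>M)"
    proof (intro nn_integral_cong)
      fix \<omega> assume \<omega>: "\<omega> \<in> space M"
      have "indicator G \<omega> * (\<integral>\<^sup>+ y. indicator b y * (ennreal \<kappa>1 * ennreal (gauss_kernel c (X s \<omega>) y)) \<partial>lborel)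
          = (\<integral>\<^sup>+ y. indicator G \<omega> * (indicator b y * (ennreal \<kappa>1 * ennreal (gauss_kernel c (X s \<omega>) y))) \<partial>lborel)"
        by (rule nn_integral_cmult[symmetric]) measurable
      also have "\<dots> = (\<integral>\<^sup>+ y. f (Y \<omega>, y) * indicator A (Y \<omega>, y) \<partial>lborel)"
        using \<omega> \<pi>Y[OF \<omega>] unfolding f_def ab G_def
        by (intro nn_integral_cong) (auto simp: indicator_def)
      finally show "indicator G \<omega> * (\<integral>\<^sup>+ y. indicator b y * (ennreal \<kappa>1 * ennreal (gauss_kernel c (X s \<omega>) y)) \<partial>lborel)
          = (\<integral>\<^sup>+ y. f (Y \<omega>, y) * indicator A (Y \<omega>, y) \<partial>lborel)" .
    qed
    also have "\<dots> = (\<integral>\<^sup>+ q. f q * indicator A q \<partial>(D \<Otimes>\<^sub>M lborel))"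
    proof (rule int_fst[symmetric])
      show "(\<lambda>q. f q * indicator A q) \<in> borel_measurable (S \<Otimes>\<^sub>M lborel)"
        using fm As by (intro borel_measurable_times_ennreal borel_measurable_indicator)
    qed
    also have "\<dots> = emeasure \<nu>2 A"
      unfolding \<nu>2_def using As sD fm by (subst emeasure_density) (auto simp: measurable_cong_sets[OF sD refl])
    finally show ?thesis .
  qed
  have leM: "\<nu>1 \<le> \<nu>2"
  proof (subst le_measure)
    show "sets \<nu>1 = sets \<nu>2" using s1 s2 by simp
    show "\<forall>A\<in>sets \<nu>1. emeasure \<nu>1 A \<le> emeasure \<nu>2 A"
    proof
      fix A assume "A \<in> sets \<nu>1"
      have "space S \<times> space lborel \<in> {a \<times> b | a b. a \<in> sets S \<and> b \<in> sets lborel}"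
        by blast
      from le_on_semiring[OF semiring_pair_rect this s1 s2 fin1 fin2 le \<open>A \<in> sets \<nu>1\<close>]
      show "emeasure \<nu>1 A \<le> emeasure \<nu>2 A" .
    qed
  qed
  have "(\<integral>\<^sup>+ \<omega>. h (Y \<omega>, X t \<omega>) \<partial>M) = (\<integral>\<^sup>+ q. h q \<partial>\<nu>1)"
    unfolding \<nu>1_def by (subst nn_integral_distr) auto
  also have "\<dots> \<le> (\<integral>\<^sup>+ q. h q \<partial>\<nu>2)"
    by (rule nn_integral_mono_measure[OF _ leM]) (simp add: s1 s2)
  also have "\<dots> = (\<integral>\<^sup>+ q. f q * h q \<partial>(D \<Otimes>\<^sub>M lborel))"
    unfolding \<nu>2_def by (rule nn_integral_density) (simp_all add: measurable_cong_sets[OF sD refl])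
  also have "\<dots> = (\<integral>\<^sup>+ \<omega>. \<integral>\<^sup>+ y. f (Y \<omega>, y) * h (Y \<omega>, y) \<partial>lborel \<partial>M)"
    by (rule int_fst) measurable
  also have "\<dots> = (\<integral>\<^sup>+ \<omega>. ennreal \<kappa>1 * \<integral>\<^sup>+ y. h (Y \<omega>, y) * ennreal (gauss_kernel c (X s \<omega>) y) \<partial>lborel \<partial>M)"
  proof (intro nn_integral_cong)
    fix \<omega> assume \<omega>: "\<omega> \<in> space M"
    show "(\<integral>\<^sup>+ y. f (Y \<omega>, y) * h (Y \<omega>, y) \<partial>lborel) = ennreal \<kappa>1 * \<integral>\<^sup>+ y. h (Y \<omega>, y) * ennreal (gauss_kernel c (X s \<omega>) y) \<partial>lborel"
      unfolding f_def using \<pi>Y[OF \<omega>] \<omega>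
      by (subst nn_integral_cmult[symmetric]) (auto intro!: nn_integral_cong simp: ac_simps)
  qed
  also have "\<dots> = ennreal \<kappa>1 * (\<integral>\<^sup>+ \<omega>. \<integral>\<^sup>+ y. h (Y \<omega>, y) * ennreal (gauss_kernel c (X s \<omega>) y) \<partial>lborel \<partial>M)"
    by (rule nn_integral_cmult) measurable
  finally show ?thesis unfolding c_def .
qed

end

context setting begin

lemma base_set:
  assumes t: "0 < t" and b[measurable]: "b \<in> sets borel"
  shows "emeasure M {\<omega>\<in>space M. X t \<omega> \<in> b}
    \<le> ennreal \<kappa>1 * (\<integral>\<^sup>+ y. indicator b y * ennreal (gauss_kernel (\<kappa>2 * t) x y) \<partial>lborel)"
proof -
  interpret P: prob_space M by (rule PM)
  define \<epsilon> where "\<epsilon> n = t / real (n + 2)" for n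
  have \<epsilon>: "0 < \<epsilon> n" "\<epsilon> n < t" for n
    unfolding \<epsilon>_def using t by (auto simp: field_simps intro!: add_pos_nonneg)
  define c where "c n = \<kappa>2 * (t - \<epsilon> n)" for n
  have cpos: "0 < c n" for n unfolding c_def using k2 \<epsilon>[of n] by simp
  have ct: "0 < \<kappa>2 * t" using k2 t by simp
  define \<Gamma> where "\<Gamma> C cc z = (\<integral>\<^sup>+ y. indicator C y * ennreal (gauss_kernel cc z y) \<partial>lborel)"
    for C :: "(real^'d) set" and cc z
  have \<Gamma>m[measurable]: "(\<lambda>\<omega>. \<Gamma> C cc (X u \<omega>)) \<in> borel_measurable M" if [measurable]: "C \<in> sets borel" for C cc u
    unfolding \<Gamma>_def by measurable
  have split: "\<Gamma> b cc z + \<Gamma> (- b) cc z = 1" if "0 < cc" for cc z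
  proof -
    have "\<Gamma> b cc z + \<Gamma> (- b) cc z = (\<integral>\<^sup>+ y. indicator b y * ennreal (gauss_kernel cc z y) + indicator (- b) y * ennreal (gauss_kernel cc z y) \<partial>lborel)"
      unfolding \<Gamma>_def by (rule nn_integral_add[symmetric]) measurable
    also have "\<dots> = (\<integral>\<^sup>+ y. ennreal (gauss_kernel cc z y) \<partial>lborel)"
      by (intro nn_integral_cong) (simp split: split_indicator)
    also have "\<dots> = 1" by (rule gauss_int_one[OF bm that])
    finally show ?thesis .
  qed
  define PX where "PX = emeasure M {\<omega>\<in>space M. X t \<omega> \<in> b}"
  define a where "a n = (\<integral>\<^sup>+\<omega>. \<Gamma> (- b) (c n) (X (\<epsilon> n) \<omega>) \<partial>M)" for n
  have step: "PX + ennreal \<kappa>1 * a n \<le> ennreal \<kappa>1" for n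
  proof -
    have top: "space M \<in> sets (natural_filtration M X (\<epsilon> n))"
      using sets.top[of "natural_filtration M X (\<epsilon> n)"] by (simp add: space_filt)
    have "PX = emeasure M ({\<omega>\<in>space M. X t \<omega> \<in> b} \<inter> space M)"
      unfolding PX_def by (simp add: Int_absorb2)
    also have "\<dots> = (\<integral>\<^sup>+ \<omega>. indicator (space M) \<omega> * (\<integral>\<^sup>+ y. indicator b y * ennreal (p (\<epsilon> n) (X (\<epsilon> n) \<omega>) t y) \<partial>lborel) \<partial>M)"
      by (rule markov_eq[OF \<epsilon>(1) \<epsilon>(2) b top])
    also have "\<dots> \<le> (\<integral>\<^sup>+ \<omega>. ennreal \<kappa>1 * \<Gamma> b (c n) (X (\<epsilon> n) \<omega>) \<partial>M)"
    proof (intro nn_integral_mono)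
      fix \<omega> assume \<omega>: "\<omega> \<in> space M"
      have "(\<integral>\<^sup>+ y. indicator b y * ennreal (p (\<epsilon> n) (X (\<epsilon> n) \<omega>) t y) \<partial>lborel)
          \<le> (\<integral>\<^sup>+ y. ennreal \<kappa>1 * (indicator b y * ennreal (gauss_kernel (c n) (X (\<epsilon> n) \<omega>) y)) \<partial>lborel)"
        unfolding c_def
        by (intro nn_integral_mono) (auto simp: pb_enn[OF \<epsilon>(1) \<epsilon>(2)] split: split_indicator)
      also have "\<dots> = ennreal \<kappa>1 * \<Gamma> b (c n) (X (\<epsilon> n) \<omega>)"
        unfolding \<Gamma>_def by (rule nn_integral_cmult) measurable
      finally show "indicator (space M) \<omega> * (\<integral>\<^sup>+ y. indicator b y * ennreal (p (\<epsilon> n) (X (\<epsilon> n) \<omega>) t y) \<partial>lborel)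
          \<le> ennreal \<kappa>1 * \<Gamma> b (c n) (X (\<epsilon> n) \<omega>)"
        using \<omega> by simp
    qed
    also have "\<dots> = ennreal \<kappa>1 * (\<integral>\<^sup>+ \<omega>. \<Gamma> b (c n) (X (\<epsilon> n) \<omega>) \<partial>M)"
      by (rule nn_integral_cmult) measurable
    finally have le1: "PX \<le> ennreal \<kappa>1 * (\<integral>\<^sup>+ \<omega>. \<Gamma> b (c n) (X (\<epsilon> n) \<omega>) \<partial>M)" .
    have "(\<integral>\<^sup>+ \<omega>. \<Gamma> b (c n) (X (\<epsilon> n) \<omega>) \<partial>M) + a n = (\<integral>\<^sup>+ \<omega>. \<Gamma> b (c n) (X (\<epsilon> n) \<omega>) + \<Gamma> (- b) (c n) (X (\<epsilon> n) \<omega>) \<partial>M)"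
      unfolding a_def by (rule nn_integral_add[symmetric]) measurable
    also have "\<dots> = (\<integral>\<^sup>+ \<omega>. 1 \<partial>M)"
      by (intro nn_integral_cong) (simp add: split[OF cpos])
    also have "\<dots> = 1" by (simp add: P.emeasure_space_1)
    finally have sum1: "(\<integral>\<^sup>+ \<omega>. \<Gamma> b (c n) (X (\<epsilon> n) \<omega>) \<partial>M) + a n = 1" .
    have "PX + ennreal \<kappa>1 * a n \<le> ennreal \<kappa>1 * (\<integral>\<^sup>+ \<omega>. \<Gamma> b (c n) (X (\<epsilon> n) \<omega>) \<partial>M) + ennreal \<kappa>1 * a n"
      using le1 by (rule add_right_mono)
    also have "\<dots> = ennreal \<kappa>1 * ((\<integral>\<^sup>+ \<omega>. \<Gamma> b (c n) (X (\<epsilon> n) \<omega>) \<partial>M) + a n)"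
      by (simp add: distrib_left)
    also have "\<dots> = ennreal \<kappa>1" using sum1 by simp
    finally show ?thesis .
  qed
  have \<epsilon>lim: "\<epsilon> \<longlonglongrightarrow> 0"
    unfolding \<epsilon>_def using LIMSEQ_ignore_initial_segment[OF lim_const_over_n[of t], of 2]
    by simp
  have clim: "c \<longlonglongrightarrow> \<kappa>2 * t"
    unfolding c_def using \<epsilon>lim by (auto intro!: tendsto_eq_intros)
  have AEconv: "AE \<omega> in M. (\<lambda>n. X (\<epsilon> n) \<omega>) \<longlonglongrightarrow> x"
    using X0 Xcont
  proof eventually_elim
    case (elim \<omega>)
    have "(\<lambda>n. X (\<epsilon> n) \<omega>) \<longlonglongrightarrow> X 0 \<omega>"
      by (rule continuous_on_tendsto_compose[OF elim(2) \<epsilon>lim]) (use \<epsilon> in \<open>auto intro!: always_eventually less_imp_le\<close>)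
    then show ?case using elim(1) by simp
  qed
  have gconv: "(\<lambda>n. gauss_kernel (c n) (z n) y) \<longlonglongrightarrow> gauss_kernel (\<kappa>2 * t) x y"
    if z: "z \<longlonglongrightarrow> x" for z y
    unfolding gauss_kernel_def using clim z ct
    by (intro tendsto_intros) auto
  have inner: "\<Gamma> (- b) (\<kappa>2 * t) x \<le> liminf (\<lambda>n. \<Gamma> (- b) (c n) (X (\<epsilon> n) \<omega>))"
    if conv: "(\<lambda>n. X (\<epsilon> n) \<omega>) \<longlonglongrightarrow> x" for \<omega>
  proof -
    have "\<Gamma> (- b) (\<kappa>2 * t) x = (\<integral>\<^sup>+ y. liminf (\<lambda>n. indicator (- b) y * ennreal (gauss_kernel (c n) (X (\<epsilon> n) \<omega>) y)) \<partial>lborel)"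
      unfolding \<Gamma>_def
    proof (intro nn_integral_cong)
      fix y
      have lim: "(\<lambda>n. indicator (- b) y * ennreal (gauss_kernel (c n) (X (\<epsilon> n) \<omega>) y)) \<longlonglongrightarrow> indicator (- b) y * ennreal (gauss_kernel (\<kappa>2 * t) x y)"
        by (intro ennreal_tendsto_cmult tendsto_ennrealI gconv[OF conv]) (simp split: split_indicator)
      show "indicator (- b) y * ennreal (gauss_kernel (\<kappa>2 * t) x y) = liminf (\<lambda>n. indicator (- b) y * ennreal (gauss_kernel (c n) (X (\<epsilon> n) \<omega>) y))"
        using lim_imp_Liminf[OF _ lim] by simp
    qed
    also have "\<dots> \<le> liminf (\<lambda>n. \<Gamma> (- b) (c n) (X (\<epsilon> n) \<omega>))"
      unfolding \<Gamma>_def by (rule nn_integral_liminf) measurable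
    finally show ?thesis .
  qed
  have outer: "\<Gamma> (- b) (\<kappa>2 * t) x \<le> liminf a"
  proof -
    have "\<Gamma> (- b) (\<kappa>2 * t) x = (\<integral>\<^sup>+ \<omega>. \<Gamma> (- b) (\<kappa>2 * t) x \<partial>M)"
      by (simp add: P.emeasure_space_1)
    also have "\<dots> \<le> (\<integral>\<^sup>+ \<omega>. liminf (\<lambda>n. \<Gamma> (- b) (c n) (X (\<epsilon> n) \<omega>)) \<partial>M)"
      by (rule nn_integral_mono_AE) (use AEconv inner in \<open>auto elim: AE_mp\<close>)
    also have "\<dots> \<le> liminf a"
      unfolding a_def by (rule nn_integral_liminf) measurable
    finally show ?thesis .
  qed
  have "PX + ennreal \<kappa>1 * liminf a = liminf (\<lambda>n. PX + ennreal \<kappa>1 * a n)"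
  proof (rule Liminf_compose_continuous_mono[symmetric])
    show "continuous_on UNIV (\<lambda>u. PX + ennreal \<kappa>1 * u)"
      by (intro continuous_on_add_ennreal continuous_on_const ennreal_continuous_on_cmult continuous_on_id) simp
    show "mono (\<lambda>u. PX + ennreal \<kappa>1 * u)"
      by (auto simp: mono_def intro: add_left_mono mult_left_mono)
  qed simp
  also have "\<dots> \<le> ennreal \<kappa>1"
    by (rule Liminf_le) (use step in auto)
  finally have "PX + ennreal \<kappa>1 * liminf a \<le> ennreal \<kappa>1" .
  then have le2: "PX + ennreal \<kappa>1 * \<Gamma> (- b) (\<kappa>2 * t) x \<le> ennreal \<kappa>1"
    using outer by (meson add_left_mono mult_left_mono order_trans zero_le)
  have "ennreal \<kappa>1 = ennreal \<kappa>1 * \<Gamma> b (\<kappa>2 * t) x + ennreal \<kappa>1 * \<Gamma> (- b) (\<kappa>2 * t) x"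
    using split[OF ct, of x] by (metis distrib_left mult.right_neutral)
  with le2 have le3: "PX + ennreal \<kappa>1 * \<Gamma> (- b) (\<kappa>2 * t) x \<le> ennreal \<kappa>1 * \<Gamma> b (\<kappa>2 * t) x + ennreal \<kappa>1 * \<Gamma> (- b) (\<kappa>2 * t) x"
    by simp
  have fin: "ennreal \<kappa>1 * \<Gamma> (- b) (\<kappa>2 * t) x \<noteq> \<top>"
  proof -
    have "\<Gamma> (- b) (\<kappa>2 * t) x \<le> 1" using split[OF ct, of x] by (metis le_iff_add add.commute)
    then have "\<Gamma> (- b) (\<kappa>2 * t) x \<noteq> \<top>" by (auto simp: top_unique)
    then show ?thesis by (simp add: ennreal_mult_eq_top_iff)
  qed
  have "PX \<le> ennreal \<kappa>1 * \<Gamma> b (\<kappa>2 * t) x"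
    using le3 fin ennreal_add_left_cancel_le[of "ennreal \<kappa>1 * \<Gamma> (- b) (\<kappa>2 * t) x" PX "ennreal \<kappa>1 * \<Gamma> b (\<kappa>2 * t) x"] by (simp add: add.commute)
  then show ?thesis unfolding PX_def \<Gamma>_def .
qed

lemma base_fun:
  assumes t: "0 < t" and \<phi>m[measurable]: "\<phi> \<in> borel_measurable borel"
  shows "(\<integral>\<^sup>+\<omega>. \<phi> (X t \<omega>) \<partial>M) \<le> ennreal \<kappa>1 * (\<integral>\<^sup>+ y. \<phi> y * ennreal (gauss_kernel (\<kappa>2 * t) x y) \<partial>lborel)"
proof -
  interpret P: prob_space M by (rule PM)
  define \<nu>1 where "\<nu>1 = distr M borel (X t)"
  define \<nu>2 where "\<nu>2 = density lborel (\<lambda>y. ennreal \<kappa>1 * ennreal (gauss_kernel (\<kappa>2 * t) x y))"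
  have s: "sets \<nu>1 = sets \<nu>2" by (simp add: \<nu>1_def \<nu>2_def)
  have le: "\<nu>1 \<le> \<nu>2"
  proof (subst le_measure[OF s], intro ballI)
    fix A assume "A \<in> sets \<nu>1"
    then have A[measurable]: "A \<in> sets borel" by (simp add: \<nu>1_def)
    have "emeasure \<nu>1 A = emeasure M {\<omega>\<in>space M. X t \<omega> \<in> A}"
      unfolding \<nu>1_def by (subst emeasure_distr) (auto intro!: arg_cong[where f="emeasure M"])
    also have "\<dots> \<le> ennreal \<kappa>1 * (\<integral>\<^sup>+ y. indicator A y * ennreal (gauss_kernel (\<kappa>2 * t) x y) \<partial>lborel)"
      by (rule base_set[OF t A])
    also have "\<dots> = (\<integral>\<^sup>+ y. ennreal \<kappa>1 * ennreal (gauss_kernel (\<kappa>2 * t) x y) * indicator A y \<partial>lborel)"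
      by (subst nn_integral_cmult[symmetric]) (auto intro!: nn_integral_cong simp: ac_simps)
    also have "\<dots> = emeasure \<nu>2 A"
      unfolding \<nu>2_def by (subst emeasure_density) auto
    finally show "emeasure \<nu>1 A \<le> emeasure \<nu>2 A" .
  qed
  have "(\<integral>\<^sup>+\<omega>. \<phi> (X t \<omega>) \<partial>M) = (\<integral>\<^sup>+y. \<phi> y \<partial>\<nu>1)"
    unfolding \<nu>1_def by (subst nn_integral_distr) auto
  also have "\<dots> \<le> (\<integral>\<^sup>+y. \<phi> y \<partial>\<nu>2)"
    by (rule nn_integral_mono_measure[OF s le])
  also have "\<dots> = (\<integral>\<^sup>+ y. (ennreal \<kappa>1 * ennreal (gauss_kernel (\<kappa>2 * t) x y)) * \<phi> y \<partial>lborel)"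
    unfolding \<nu>2_def by (rule nn_integral_density) auto
  also have "\<dots> = ennreal \<kappa>1 * (\<integral>\<^sup>+ y. \<phi> y * ennreal (gauss_kernel (\<kappa>2 * t) x y) \<partial>lborel)"
    by (subst nn_integral_cmult[symmetric]) (auto intro!: nn_integral_cong simp: ac_simps)
  finally show ?thesis .
qed

lemma kappa1_ge1: "1 \<le> \<kappa>1"
proof -
  interpret P: prob_space M by (rule PM)
  have top: "space M \<in> sets (natural_filtration M X 1)"
    using sets.top[of "natural_filtration M X 1"] by (simp add: space_filt)
  have pb12: "ennreal (p 1 z 2 y) \<le> ennreal \<kappa>1 * ennreal (gauss_kernel \<kappa>2 z y)" for z y
    using pb_enn[of 1 2 z y] by simp
  have "ennreal 1 = emeasure M ({\<omega>\<in>space M. X 2 \<omega> \<in> UNIV} \<inter> space M)"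
    by (simp add: P.emeasure_space_1)
  also have "\<dots> = (\<integral>\<^sup>+ \<omega>. indicator (space M) \<omega> * (\<integral>\<^sup>+ y. indicator UNIV y * ennreal (p 1 (X 1 \<omega>) 2 y) \<partial>lborel) \<partial>M)"
    by (rule markov_eq) (use top in auto)
  also have "\<dots> \<le> (\<integral>\<^sup>+ \<omega>. (\<integral>\<^sup>+ y. ennreal \<kappa>1 * ennreal (gauss_kernel \<kappa>2 (X 1 \<omega>) y) \<partial>lborel) \<partial>M)"
    by (intro nn_integral_mono) (auto simp: pb12 intro!: nn_integral_mono)
  also have "\<dots> = (\<integral>\<^sup>+ \<omega>. ennreal \<kappa>1 \<partial>M)"
    using k2 by (intro nn_integral_cong) (simp add: nn_integral_cmult gauss_int_one[OF bm])
  also have "\<dots> = ennreal \<kappa>1" by (simp add: P.emeasure_space_1)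
  finally show ?thesis using k1 by simp
qed

end

definition prevpt :: "real^'d \<Rightarrow> nat \<Rightarrow> (nat \<Rightarrow> real^'d) \<Rightarrow> real^'d" where
  "prevpt x k z = (if k = 0 then x else z (k - 1))"

definition dtime :: "(nat \<Rightarrow> real) \<Rightarrow> nat \<Rightarrow> real" where
  "dtime c k = c k - (if k = 0 then 0 else c (k - 1))"

definition kstep :: "real^'d \<Rightarrow> (nat \<Rightarrow> real) \<Rightarrow> nat \<Rightarrow> ((nat \<Rightarrow> real^'d) \<Rightarrow> ennreal) \<Rightarrow> (nat \<Rightarrow> real^'d) \<Rightarrow> ennreal" where
  "kstep x c k h z = (\<integral>\<^sup>+ y. h (z(k := y)) * ennreal (gauss_kernel (dtime c k) (prevpt x k z) y) \<partial>lborel)"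

fun J :: "real^'d \<Rightarrow> (nat \<Rightarrow> real) \<Rightarrow> nat \<Rightarrow> ((nat \<Rightarrow> real^'d) \<Rightarrow> ennreal) \<Rightarrow> ennreal" where
  "J x c 0 h = h (\<lambda>_. undefined)"
| "J x c (Suc k) h = J x c k (kstep x c k h)"

lemma prevpt_meas[measurable]:
  "(\<lambda>z. prevpt x k z) \<in> borel_measurable (PiM {..<k} (\<lambda>_. borel :: (real^'d) measure))"
proof (cases k)
  case 0 then show ?thesis unfolding prevpt_def by simp
next
  case (Suc j)
  then show ?thesis unfolding prevpt_def
    by (simp add: measurable_component_singleton)
qed

lemma upd_meas:
  "(\<lambda>(z, y). z(k := y)) \<in> measurable (PiM {..<k} (\<lambda>_. borel :: (real^'d) measure) \<Otimes>\<^sub>M lborel) (PiM {..<Suc k} (\<lambda>_. borel))"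
proof -
  have "(\<lambda>q. (fst q)(k := snd q)) \<in> measurable (PiM {..<k} (\<lambda>_. borel :: (real^'d) measure) \<Otimes>\<^sub>M lborel) (PiM {..<Suc k} (\<lambda>_. borel))"
    by (rule measurable_fun_upd[where J="{..<k}"]) (auto simp: lessThan_Suc)
  then show ?thesis by (simp add: case_prod_beta')
qed

lemma kstep_meas[measurable]:
  assumes hm: "h \<in> borel_measurable (PiM {..<Suc k} (\<lambda>_. borel :: (real^'d) measure))"
  shows "kstep x c k h \<in> borel_measurable (PiM {..<k} (\<lambda>_. borel :: (real^'d) measure))"
proof -
  have "(\<lambda>q. h ((fst q)(k := snd q))) \<in> borel_measurable (PiM {..<k} (\<lambda>_. borel :: (real^'d) measure) \<Otimes>\<^sub>M lborel)"
    using measurable_comp[OF upd_meas hm] by (simp add: comp_def case_prod_beta')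
  moreover have "(\<lambda>q. ennreal (gauss_kernel (dtime c k) (prevpt x k (fst q)) (snd q))) \<in> borel_measurable (PiM {..<k} (\<lambda>_. borel :: (real^'d) measure) \<Otimes>\<^sub>M lborel)"
    by measurable
  ultimately have "(\<lambda>q. h ((fst q)(k := snd q)) * ennreal (gauss_kernel (dtime c k) (prevpt x k (fst q)) (snd q))) \<in> borel_measurable (PiM {..<k} (\<lambda>_. borel :: (real^'d) measure) \<Otimes>\<^sub>M lborel)"
    by (rule borel_measurable_times_ennreal)
  then show ?thesis
    unfolding kstep_def[abs_def]
    by (intro lborel.borel_measurable_nn_integral) (simp add: case_prod_beta')
qed

lemma inc_le:
  fixes s :: "nat \<Rightarrow> real"
  assumes inc: "\<And>j. Suc j < k \<Longrightarrow> s j < s (Suc j)" and ji: "j \<le> i" and ik: "i < k"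
  shows "s j \<le> s i"
  using ji ik
proof (induction i)
  case 0 then show ?case by simp
next
  case (Suc i)
  show ?case
  proof (cases "j = Suc i")
    case True then show ?thesis by simp
  next
    case False
    then have "j \<le> i" using Suc.prems by simp
    then have "s j \<le> s i" using Suc by simp
    also have "s i < s (Suc i)" using inc Suc.prems by simp
    finally show ?thesis by simp
  qed
qed

context setting begin

lemma chainX:
  fixes s :: "nat \<Rightarrow> real"
  assumes pos: "\<And>j. j < k \<Longrightarrow> 0 < s j" and inc: "\<And>j. Suc j < k \<Longrightarrow> s j < s (Suc j)"
    and hm: "h \<in> borel_measurable (PiM {..<k} (\<lambda>_. borel :: (real^'d) measure))"
  shows "(\<integral>\<^sup>+\<omega>. h (\<lambda>j\<in>{..<k}. X (s j) \<omega>) \<partial>M) \<le> ennreal \<kappa>1 ^ k * J x (\<lambda>j. \<kappa>2 * s j) k h"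
  using pos inc hm
proof (induction k arbitrary: h)
  case 0
  interpret P: prob_space M by (rule PM)
  have "(\<lambda>j\<in>{..<0::nat}. X (s j) \<omega>) = (\<lambda>_. undefined)" for \<omega> by (simp add: restrict_def)
  then show ?case by (simp add: P.emeasure_space_1)
next
  case (Suc k)
  interpret P: prob_space M by (rule PM)
  define c where "c = (\<lambda>j. \<kappa>2 * s j)"
  define Y where "Y \<omega> = (\<lambda>j\<in>{..<k}. X (s j) \<omega>)" for \<omega>
  have Ym[measurable]: "Y \<in> measurable M (PiM {..<k} (\<lambda>_. borel :: (real^'d) measure))"
    unfolding Y_def by (intro measurable_restrict) simp
  have eqY: "(\<lambda>j\<in>{..<Suc k}. X (s j) \<omega>) = (Y \<omega>)(k := X (s k) \<omega>)" for \<omega>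
    unfolding Y_def by (auto simp: restrict_def fun_eq_iff)
  have hm: "h \<in> borel_measurable (PiM {..<Suc k} (\<lambda>_. borel :: (real^'d) measure))" by fact
  have ksm: "kstep x c k h \<in> borel_measurable (PiM {..<k} (\<lambda>_. borel :: (real^'d) measure))"
    by (rule kstep_meas[OF hm])
  have stepc: "(\<integral>\<^sup>+\<omega>. h ((Y \<omega>)(k := X (s k) \<omega>)) \<partial>M) \<le> ennreal \<kappa>1 * (\<integral>\<^sup>+\<omega>. kstep x c k h (Y \<omega>) \<partial>M)"
  proof (cases k)
    case 0
    have Y0: "Y \<omega> = (\<lambda>_. undefined)" for \<omega> unfolding Y_def 0 by (simp add: restrict_def)
    define \<phi> where "\<phi> y = h ((\<lambda>_. undefined)(0 := y))" for y
    have \<phi>m: "\<phi> \<in> borel_measurable borel"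
    proof -
      have "(\<lambda>v. (\<lambda>_. undefined)(0 := v)) \<in> measurable borel (PiM (insert 0 {}) (\<lambda>_. borel :: (real^'d) measure))"
        by (rule measurable_component_update) (auto simp: space_PiM)
      then have "(\<lambda>v. (\<lambda>_. undefined)(0 := v)) \<in> measurable borel (PiM {..<Suc k} (\<lambda>_. borel :: (real^'d) measure))"
        using 0 by (simp add: lessThan_Suc)
      from measurable_comp[OF this hm] show ?thesis unfolding \<phi>_def by (simp add: comp_def)
    qed
    have "(\<integral>\<^sup>+\<omega>. h ((Y \<omega>)(k := X (s k) \<omega>)) \<partial>M) = (\<integral>\<^sup>+\<omega>. \<phi> (X (s 0) \<omega>) \<partial>M)"
      unfolding \<phi>_def Y0 0 ..
    also have "\<dots> \<le> ennreal \<kappa>1 * (\<integral>\<^sup>+ y. \<phi> y * ennreal (gauss_kernel (\<kappa>2 * s 0) x y) \<partial>lborel)"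
      by (rule base_fun[OF _ \<phi>m]) (use Suc.prems(1) 0 in simp)
    also have "(\<integral>\<^sup>+ y. \<phi> y * ennreal (gauss_kernel (\<kappa>2 * s 0) x y) \<partial>lborel) = kstep x c k h (\<lambda>_. undefined)"
      unfolding kstep_def \<phi>_def 0 c_def dtime_def prevpt_def by simp
    also have "\<dots> = (\<integral>\<^sup>+\<omega>. kstep x c k h (Y \<omega>) \<partial>M)"
      unfolding Y0 by (simp add: P.emeasure_space_1)
    finally show ?thesis .
  next
    case (Suc k')
    have k': "k - 1 = k'" "k = Suc k'" using Suc by simp_all
    have sk: "0 < s k'" "s k' < s k" using Suc.prems(1,2) Suc by auto
    have Yf: "Y \<in> measurable (natural_filtration M X (s k')) (PiM {..<k} (\<lambda>_. borel :: (real^'d) measure))"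
      unfolding Y_def
    proof (intro measurable_restrict)
      fix j assume j: "j \<in> {..<k}"
      show "X (s j) \<in> measurable (natural_filtration M X (s k')) borel"
      proof (rule filt_meas)
        show "0 \<le> s j" using Suc.prems(1)[of j] j by simp
        show "s j \<le> s k'"
          by (rule inc_le[where k="Suc k"]) (use Suc.prems(2) j k' in auto)
      qed
    qed
    have \<pi>m: "(\<lambda>z. z k') \<in> borel_measurable (PiM {..<k} (\<lambda>_. borel :: (real^'d) measure))"
      using k' by (simp add: measurable_component_singleton)
    have \<pi>Y: "Y \<omega> k' = X (s k') \<omega>" for \<omega> unfolding Y_def using k' by simp
    have h'm: "(\<lambda>(z, y). h (z(k := y))) \<in> borel_measurable (PiM {..<k} (\<lambda>_. borel :: (real^'d) measure) \<Otimes>\<^sub>M borel)"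
    proof -
      have sl: "sets (PiM {..<k} (\<lambda>_. borel :: (real^'d) measure) \<Otimes>\<^sub>M lborel) = sets (PiM {..<k} (\<lambda>_. borel :: (real^'d) measure) \<Otimes>\<^sub>M borel)"
        by (rule sets_pair_measure_cong) auto
      have "(\<lambda>(z, y). h (z(k := y))) \<in> borel_measurable (PiM {..<k} (\<lambda>_. borel :: (real^'d) measure) \<Otimes>\<^sub>M lborel)"
        using measurable_comp[OF upd_meas hm] by (simp add: comp_def case_prod_beta')
      then show ?thesis by (simp add: measurable_cong_sets[OF sl refl])
    qed
    have "(\<integral>\<^sup>+\<omega>. h ((Y \<omega>)(k := X (s k) \<omega>)) \<partial>M) = (\<integral>\<^sup>+\<omega>. (\<lambda>(z, y). h (z(k := y))) (Y \<omega>, X (s k) \<omega>) \<partial>M)"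
      by simp
    also have "\<dots> \<le> ennreal \<kappa>1 * (\<integral>\<^sup>+ \<omega>. \<integral>\<^sup>+ y. (\<lambda>(z, y). h (z(k := y))) (Y \<omega>, y) * ennreal (gauss_kernel (\<kappa>2 * (s k - s k')) (X (s k') \<omega>) y) \<partial>lborel \<partial>M)"
      by (rule step_markov[OF sk Ym Yf \<pi>m _ h'm]) (rule \<pi>Y)
    also have "(\<integral>\<^sup>+ \<omega>. \<integral>\<^sup>+ y. (\<lambda>(z, y). h (z(k := y))) (Y \<omega>, y) * ennreal (gauss_kernel (\<kappa>2 * (s k - s k')) (X (s k') \<omega>) y) \<partial>lborel \<partial>M)
        = (\<integral>\<^sup>+\<omega>. kstep x c k h (Y \<omega>) \<partial>M)"
      unfolding kstep_def c_def dtime_def prevpt_def using k'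
      by (simp add: \<pi>Y right_diff_distrib)
    finally show ?thesis .
  qed
  have IH: "(\<integral>\<^sup>+\<omega>. kstep x c k h (Y \<omega>) \<partial>M) \<le> ennreal \<kappa>1 ^ k * J x c k (kstep x c k h)"
    unfolding Y_def c_def using Suc.IH[OF _ _ ksm[unfolded c_def]] Suc.prems(1,2) by (simp add: restrict_def)
  have "(\<integral>\<^sup>+\<omega>. h (\<lambda>j\<in>{..<Suc k}. X (s j) \<omega>) \<partial>M) = (\<integral>\<^sup>+\<omega>. h ((Y \<omega>)(k := X (s k) \<omega>)) \<partial>M)"
    by (simp add: eqY)
  also have "\<dots> \<le> ennreal \<kappa>1 * (\<integral>\<^sup>+\<omega>. kstep x c k h (Y \<omega>) \<partial>M)" by (rule stepc)
  also have "\<dots> \<le> ennreal \<kappa>1 * (ennreal \<kappa>1 ^ k * J x c k (kstep x c k h))"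
    by (rule mult_left_mono[OF IH]) simp
  also have "\<dots> = ennreal \<kappa>1 ^ Suc k * J x c (Suc k) h"
    by (simp add: mult.assoc)
  finally show ?case unfolding c_def .
qed

end

context setting begin

lemma PN: "prob_space N" using bm unfolding std_brownian_motion_def by (elim conjE) assumption
lemma Bm[measurable]: "B t \<in> borel_measurable N"
proof -
  have "\<forall>t. B t \<in> borel_measurable N" using bm unfolding std_brownian_motion_def by (elim conjE) assumption
  then show ?thesis by blast
qed
lemma B0: "AE \<omega> in N. B 0 \<omega> = x" using bm unfolding std_brownian_motion_def by (elim conjE) assumption
lemma Bdist:
  assumes "0 \<le> s" "s < t"
  shows "distributed N lborel (\<lambda>\<omega>. B t \<omega> - B s \<omega>) (\<lambda>y. ennreal (gauss_kernel (t - s) 0 y))"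
proof -
  have "\<forall>s t. 0 \<le> s \<longrightarrow> s < t \<longrightarrow>
        distributed N lborel (\<lambda>\<omega>. B t \<omega> - B s \<omega>) (\<lambda>y. ennreal (gauss_kernel (t - s) 0 y))"
    using bm unfolding std_brownian_motion_def by (elim conjE) assumption
  from this[rule_format, OF assms] show ?thesis .
qed
lemma Bindep:
  assumes "0 \<le> ts 0" "\<forall>i<m. ts i \<le> ts (Suc i)"
  shows "prob_space.indep_vars N (\<lambda>_. borel) (\<lambda>i \<omega>. B (ts (Suc i)) \<omega> - B (ts i) \<omega>) {..<m}"
proof -
  have "\<forall>(ts :: nat \<Rightarrow> real) m. 0 \<le> ts 0 \<longrightarrow> (\<forall>i<m. ts i \<le> ts (Suc i)) \<longrightarrow>
        prob_space.indep_vars N (\<lambda>_. borel) (\<lambda>i \<omega>. B (ts (Suc i)) \<omega> - B (ts i) \<omega>) {..<m}"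
    using bm unfolding std_brownian_motion_def by (elim conjE) assumption
  then show ?thesis using assms by simp
qed

lemma stepB:
  fixes c :: "nat \<Rightarrow> real"
  assumes pos: "\<And>j. j < Suc k \<Longrightarrow> 0 < c j" and inc: "\<And>j. Suc j < Suc k \<Longrightarrow> c j < c (Suc j)"
    and hm: "h \<in> borel_measurable (PiM {..<Suc k} (\<lambda>_. borel :: (real^'d) measure))"
  shows "(\<integral>\<^sup>+\<omega>. h ((\<lambda>j\<in>{..<k}. B (c j) \<omega>)(k := B (c k) \<omega>)) \<partial>N) = (\<integral>\<^sup>+\<omega>. kstep x c k h (\<lambda>j\<in>{..<k}. B (c j) \<omega>) \<partial>N)"
proof -
  interpret P: prob_space N by (rule PN)
  let ?PI = "PiM {..<k} (\<lambda>_. borel :: (real^'d) measure)"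
  define ts where "ts i = (if i = 0 then 0 else c (i - 1))" for i
  define Inc where "Inc i \<omega> = B (ts (Suc i)) \<omega> - B (ts i) \<omega>" for i \<omega>
  have ind: "P.indep_vars (\<lambda>_. borel) Inc {..<Suc k}"
    unfolding Inc_def
  proof (rule Bindep)
    show "0 \<le> ts 0" by (simp add: ts_def)
    show "\<forall>i<Suc k. ts i \<le> ts (Suc i)"
    proof safe
      fix i assume i: "i < Suc k"
      show "ts i \<le> ts (Suc i)"
      proof (cases i)
        case 0 then show ?thesis using pos[of 0] by (simp add: ts_def)
      next
        case (Suc i') then show ?thesis using inc[of i'] i by (simp add: ts_def)
      qed
    qed
  qed
  have iv: "P.indep_var ?PI (\<lambda>\<omega>. \<lambda>i\<in>{..<k}. Inc i \<omega>) (PiM {k} (\<lambda>_. borel :: (real^'d) measure)) (\<lambda>\<omega>. \<lambda>i\<in>{k}. Inc i \<omega>)"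
    by (rule P.indep_var_restrict[OF ind]) auto
  define \<Phi> where "\<Phi> w = (\<lambda>j\<in>{..<k}. x + (\<Sum>i<Suc j. w i))" for w :: "nat \<Rightarrow> real^'d"
  have \<Phi>m: "\<Phi> \<in> measurable ?PI ?PI"
    unfolding \<Phi>_def
  proof (intro measurable_restrict)
    fix j assume j: "j \<in> {..<k}"
    have "(\<lambda>w. \<Sum>i<Suc j. w i) \<in> borel_measurable ?PI"
    proof (rule borel_measurable_sum)
      fix i assume "i \<in> {..<Suc j}"
      then have "i \<in> {..<k}" using j by auto
      then show "(\<lambda>w. w i) \<in> borel_measurable ?PI"
        by (rule measurable_component_singleton)
    qed
    then show "(\<lambda>w. x + (\<Sum>i<Suc j. w i)) \<in> borel_measurable ?PI"
      by measurable
  qed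
  define YB' where "YB' \<omega> = (\<lambda>j\<in>{..<k}. x + (\<Sum>i<Suc j. Inc i \<omega>))" for \<omega>
  define D where "D \<omega> = Inc k \<omega>" for \<omega>
  define Dv where "Dv \<omega> = (\<lambda>i\<in>{k}. Inc i \<omega>)" for \<omega>
  let ?PK = "PiM {k} (\<lambda>_. borel :: (real^'d) measure)"
  have iv3: "P.indep_var ?PI YB' ?PK Dv"
  proof -
    have "P.indep_var ?PI (\<Phi> \<circ> (\<lambda>\<omega>. \<lambda>i\<in>{..<k}. Inc i \<omega>)) ?PK (id \<circ> (\<lambda>\<omega>. \<lambda>i\<in>{k}. Inc i \<omega>))"
      by (rule P.indep_var_compose[OF iv \<Phi>m]) (simp add: id_def)
    moreover have "\<Phi> \<circ> (\<lambda>\<omega>. \<lambda>i\<in>{..<k}. Inc i \<omega>) = YB'"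
      unfolding \<Phi>_def YB'_def by (auto simp: fun_eq_iff restrict_def intro!: sum.cong)
    moreover have "id \<circ> (\<lambda>\<omega>. \<lambda>i\<in>{k}. Inc i \<omega>) = Dv"
      unfolding Dv_def by (auto simp: fun_eq_iff)
    ultimately show ?thesis by simp
  qed
  have YB'm[measurable]: "YB' \<in> measurable N ?PI" and Dvm[measurable]: "Dv \<in> measurable N ?PK"
    using iv3 by (auto dest: P.indep_var_rv1 P.indep_var_rv2)
  have Dm[measurable]: "D \<in> borel_measurable N"
    unfolding D_def Inc_def by measurable
  have joint: "distr N (?PI \<Otimes>\<^sub>M ?PK) (\<lambda>\<omega>. (YB' \<omega>, Dv \<omega>)) = distr N ?PI YB' \<Otimes>\<^sub>M distr N ?PK Dv"
    using iv3 unfolding P.indep_var_distribution_eq by simp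
  have tsk: "0 \<le> ts k" "ts k < c k" "c k - ts k = dtime c k"
  proof -
    have p1: "0 < c (k - 1)" by (rule pos) simp
    have p0: "0 < c k" by (rule pos) simp
    have i1: "c (k - 1) < c k" if "0 < k" using inc[of "k - 1"] that by simp
    show "0 \<le> ts k" "ts k < c k" "c k - ts k = dtime c k"
      using p1 p0 i1 by (auto simp: ts_def dtime_def)
  qed
  have Ddist: "distr N lborel D = density lborel (\<lambda>u. ennreal (gauss_kernel (dtime c k) 0 u))"
  proof -
    have "distributed N lborel D (\<lambda>u. ennreal (gauss_kernel (c k - ts k) 0 u))"
      unfolding D_def Inc_def using Bdist[OF tsk(1) tsk(2)] by (simp add: ts_def)
    then show ?thesis unfolding distributed_def tsk(3) by blast
  qed
  have AEeq: "AE \<omega> in N. (\<lambda>j\<in>{..<k}. B (c j) \<omega>) = YB' \<omega> \<and> B (c k) \<omega> = prevpt x k (YB' \<omega>) + D \<omega>"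
    using B0
  proof eventually_elim
    case (elim \<omega>)
    have tel: "(\<Sum>i<Suc j. Inc i \<omega>) = B (c j) \<omega> - x" for j
      unfolding Inc_def using sum_lessThan_telescope[of "\<lambda>i. B (ts i) \<omega>" "Suc j"] elim
      by (simp add: ts_def)
    have 1: "(\<lambda>j\<in>{..<k}. B (c j) \<omega>) = YB' \<omega>"
      unfolding YB'_def tel by (simp add: restrict_def)
    have 2: "B (c k) \<omega> = prevpt x k (YB' \<omega>) + D \<omega>"
      unfolding prevpt_def YB'_def tel using elim
      by (cases k) (auto simp: ts_def D_def Inc_def)
    show ?case using 1 2 by simp
  qed
  define H where "H = (\<lambda>(z, u). h (z(k := prevpt x k z + u)))"
  have Hm: "H \<in> borel_measurable (?PI \<Otimes>\<^sub>M lborel)"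
  proof -
    have "(\<lambda>q. (fst q)(k := prevpt x k (fst q) + snd q)) \<in> measurable (?PI \<Otimes>\<^sub>M lborel) (PiM {..<Suc k} (\<lambda>_. borel :: (real^'d) measure))"
    proof (rule measurable_fun_upd[where J="{..<k}"])
      show "{..<Suc k} = {..<k} \<union> {k}" by auto
      show "fst \<in> measurable (?PI \<Otimes>\<^sub>M lborel) ?PI" by simp
      have "snd \<in> measurable (?PI \<Otimes>\<^sub>M lborel) (lborel :: (real^'d) measure)" by simp
      then have "snd \<in> borel_measurable (?PI \<Otimes>\<^sub>M lborel)" by simp
      then show "(\<lambda>q. prevpt x k (fst q) + snd q) \<in> measurable (?PI \<Otimes>\<^sub>M lborel) borel"
        by measurable
    qed
    from measurable_comp[OF this hm] show ?thesis
      unfolding H_def by (simp add: comp_def case_prod_beta')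
  qed
  interpret DY: prob_space "distr N ?PI YB'" by (rule P.prob_space_distr) simp
  interpret DD: prob_space "distr N ?PK Dv" by (rule P.prob_space_distr) simp
  have sP: "sets (distr N ?PI YB' \<Otimes>\<^sub>M distr N ?PK Dv) = sets (?PI \<Otimes>\<^sub>M ?PK)"
    by (rule sets_pair_measure_cong) auto
  define H' where "H' = (\<lambda>(z, w). H (z, w k))"
  have H'm: "H' \<in> borel_measurable (?PI \<Otimes>\<^sub>M ?PK)"
  proof -
    have "(\<lambda>q. (fst q, snd q k)) \<in> measurable (?PI \<Otimes>\<^sub>M ?PK) (?PI \<Otimes>\<^sub>M lborel)"
    proof (rule measurable_Pair)
      show "fst \<in> measurable (?PI \<Otimes>\<^sub>M ?PK) ?PI" by simp
      have "(\<lambda>w. w k) \<in> measurable ?PK lborel" by (simp add: measurable_component_singleton)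
      then show "(\<lambda>q. snd q k) \<in> measurable (?PI \<Otimes>\<^sub>M ?PK) lborel"
        using measurable_comp[OF measurable_snd] by (auto simp: comp_def)
    qed
    from measurable_comp[OF this Hm] show ?thesis unfolding H'_def by (simp add: comp_def case_prod_beta')
  qed
  have inner: "(\<integral>\<^sup>+ w. H' (z, w) \<partial>distr N ?PK Dv) = kstep x c k h z" if z: "z \<in> space ?PI" for z
  proof -
    have Hz: "(\<lambda>u. H (z, u)) \<in> borel_measurable lborel"
      using measurable_Pair2[OF Hm z] .
    have "(\<integral>\<^sup>+ w. H' (z, w) \<partial>distr N ?PK Dv) = (\<integral>\<^sup>+ \<omega>. H' (z, Dv \<omega>) \<partial>N)"
      by (rule nn_integral_distr) (simp_all add: measurable_Pair2[OF H'm z])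
    also have "\<dots> = (\<integral>\<^sup>+ \<omega>. H (z, D \<omega>) \<partial>N)"
      by (simp add: H'_def Dv_def D_def)
    also have "\<dots> = (\<integral>\<^sup>+ u. H (z, u) \<partial>distr N lborel D)"
      by (rule nn_integral_distr[symmetric]) (use Hz in simp_all)
    also have "\<dots> = (\<integral>\<^sup>+ u. ennreal (gauss_kernel (dtime c k) 0 u) * H (z, u) \<partial>lborel)"
      unfolding Ddist by (rule nn_integral_density) (use Hz in simp_all)
    also have "\<dots> = (\<integral>\<^sup>+ u. h (z(k := prevpt x k z + u)) * ennreal (gauss_kernel (dtime c k) (prevpt x k z) (prevpt x k z + u)) \<partial>lborel)"
      unfolding H_def by (intro nn_integral_cong) (simp add: gauss_shift[of _ "prevpt x k z"] mult.commute)
    also have "\<dots> = kstep x c k h z"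
      unfolding kstep_def
    proof (rule lborel_shift[symmetric])
      have "(\<lambda>y. h (z(k := y))) \<in> borel_measurable borel"
      proof -
        have "(\<lambda>y. z(k := y)) \<in> measurable borel (PiM {..<Suc k} (\<lambda>_. borel :: (real^'d) measure))"
          using z by (simp add: lessThan_Suc measurable_component_update)
        from measurable_comp[OF this hm] show ?thesis by (simp add: comp_def)
      qed
      then show "(\<lambda>y. h (z(k := y)) * ennreal (gauss_kernel (dtime c k) (prevpt x k z) y)) \<in> borel_measurable borel"
        by measurable
    qed
    finally show ?thesis .
  qed
  have "(\<integral>\<^sup>+\<omega>. h ((\<lambda>j\<in>{..<k}. B (c j) \<omega>)(k := B (c k) \<omega>)) \<partial>N) = (\<integral>\<^sup>+\<omega>. H' (YB' \<omega>, Dv \<omega>) \<partial>N)"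
  proof (rule nn_integral_cong_AE)
    show "AE \<omega> in N. h ((\<lambda>j\<in>{..<k}. B (c j) \<omega>)(k := B (c k) \<omega>)) = H' (YB' \<omega>, Dv \<omega>)"
      using AEeq
    proof eventually_elim
      case (elim \<omega>)
      then have e1: "(\<lambda>j\<in>{..<k}. B (c j) \<omega>) = YB' \<omega>" and e2: "B (c k) \<omega> = prevpt x k (YB' \<omega>) + D \<omega>"
        by auto
      have "h ((\<lambda>j\<in>{..<k}. B (c j) \<omega>)(k := B (c k) \<omega>)) = h ((YB' \<omega>)(k := prevpt x k (YB' \<omega>) + D \<omega>))"
        by (simp only: e1 e2)
      also have "\<dots> = H' (YB' \<omega>, Dv \<omega>)"
        by (simp add: H'_def H_def Dv_def D_def)
      finally show ?case .
    qed
  qed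
  also have "\<dots> = (\<integral>\<^sup>+q. H' q \<partial>distr N (?PI \<Otimes>\<^sub>M ?PK) (\<lambda>\<omega>. (YB' \<omega>, Dv \<omega>)))"
    by (rule nn_integral_distr[symmetric]) (use H'm in simp_all)
  also have "\<dots> = (\<integral>\<^sup>+q. H' q \<partial>(distr N ?PI YB' \<Otimes>\<^sub>M distr N ?PK Dv))"
    by (simp add: joint)
  also have "\<dots> = (\<integral>\<^sup>+z. \<integral>\<^sup>+w. H' (z, w) \<partial>distr N ?PK Dv \<partial>distr N ?PI YB')"
    by (rule DD.nn_integral_fst[symmetric]) (use H'm in \<open>simp add: measurable_cong_sets[OF sP refl]\<close>)
  also have "\<dots> = (\<integral>\<^sup>+z. kstep x c k h z \<partial>distr N ?PI YB')"
    by (rule nn_integral_cong) (simp add: inner)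
  also have "\<dots> = (\<integral>\<^sup>+\<omega>. kstep x c k h (YB' \<omega>) \<partial>N)"
    by (rule nn_integral_distr) (simp_all add: kstep_meas[OF hm])
  also have "\<dots> = (\<integral>\<^sup>+\<omega>. kstep x c k h (\<lambda>j\<in>{..<k}. B (c j) \<omega>) \<partial>N)"
    by (rule nn_integral_cong_AE) (use AEeq in \<open>auto elim!: eventually_mono\<close>)
  finally show ?thesis .
qed

end

context setting begin

lemma chainB:
  fixes c :: "nat \<Rightarrow> real"
  assumes pos: "\<And>j. j < k \<Longrightarrow> 0 < c j" and inc: "\<And>j. Suc j < k \<Longrightarrow> c j < c (Suc j)"
    and hm: "h \<in> borel_measurable (PiM {..<k} (\<lambda>_. borel :: (real^'d) measure))"
  shows "(\<integral>\<^sup>+\<omega>. h (\<lambda>j\<in>{..<k}. B (c j) \<omega>) \<partial>N) = J x c k h"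
  using pos inc hm
proof (induction k arbitrary: h)
  case 0
  interpret P: prob_space N by (rule PN)
  have "(\<lambda>j\<in>{..<0::nat}. B (c j) \<omega>) = (\<lambda>_. undefined)" for \<omega> by (simp add: restrict_def)
  then show ?case by (simp add: P.emeasure_space_1)
next
  case (Suc k)
  have eq: "(\<lambda>j\<in>{..<Suc k}. B (c j) \<omega>) = (\<lambda>j\<in>{..<k}. B (c j) \<omega>)(k := B (c k) \<omega>)" for \<omega>
    by (auto simp: restrict_def fun_eq_iff)
  have ksm: "kstep x c k h \<in> borel_measurable (PiM {..<k} (\<lambda>_. borel :: (real^'d) measure))"
    by (rule kstep_meas[OF Suc.prems(3)])
  have "(\<integral>\<^sup>+\<omega>. h (\<lambda>j\<in>{..<Suc k}. B (c j) \<omega>) \<partial>N) = (\<integral>\<^sup>+\<omega>. h ((\<lambda>j\<in>{..<k}. B (c j) \<omega>)(k := B (c k) \<omega>)) \<partial>N)"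
    by (simp only: eq)
  also have "\<dots> = (\<integral>\<^sup>+\<omega>. kstep x c k h (\<lambda>j\<in>{..<k}. B (c j) \<omega>) \<partial>N)"
    by (rule stepB[where k=k and c=c and h=h, OF Suc.prems(1) Suc.prems(2) Suc.prems(3)])
  also have "\<dots> = J x c k (kstep x c k h)"
    by (rule Suc.IH[OF _ _ ksm]) (use Suc.prems(1,2) in auto)
  also have "\<dots> = J x c (Suc k) h" by simp
  finally show ?case .
qed

end

theorem lemma3p1:
  fixes M :: "'w measure" and X :: "real \<Rightarrow> 'w \<Rightarrow> real^'d" and x :: "real^'d"
    and p :: "real \<Rightarrow> real^'d \<Rightarrow> real \<Rightarrow> real^'d \<Rightarrow> real"
    and \<kappa>1 \<kappa>2 :: real
    and N :: "'v measure" and B :: "real \<Rightarrow> 'v \<Rightarrow> real^'d"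
    and n :: nat and t :: "nat \<Rightarrow> real" and f :: "(nat \<Rightarrow> real^'d) \<Rightarrow> real"
  assumes "markov_diffusion_with_density M X x p"
    and "\<kappa>1 > 0" and "\<kappa>2 > 0"
    and "\<And>s t z y. 0 < s \<Longrightarrow> s < t \<Longrightarrow> p s z t y \<le> \<kappa>1 * gauss_kernel (\<kappa>2 * (t - s)) z y"
    and "std_brownian_motion N B x"
    and "\<And>i. i < n \<Longrightarrow> 0 < t i"
    and "cylindrical_fun n f"
    and "\<And>y. y \<in> PiE {..<n} (\<lambda>_. UNIV) \<Longrightarrow> f y \<ge> 0"
  shows "(\<integral>\<^sup>+ \<omega>. ennreal (f (\<lambda>i\<in>{..<n}. X (t i) \<omega>)) \<partial>M)
           \<le> ennreal (\<kappa>1 ^ n) * (\<integral>\<^sup>+ \<omega>. ennreal (f (\<lambda>i\<in>{..<n}. B (\<kappa>2 * t i) \<omega>)) \<partial>N)"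
proof -
  interpret S: setting M X x p \<kappa>1 \<kappa>2 N B
    by (rule setting.intro) (rule assms(1), rule assms(2), rule assms(3), rule assms(4), assumption+, rule assms(5))
  have fm: "f \<in> borel_measurable (PiM {..<n} (\<lambda>_. borel :: (real^'d) measure))"
    using assms(7) unfolding cylindrical_fun_def by (elim conjE) assumption
  define T where "T = t ` {..<n}"
  define L where "L = sorted_list_of_set T"
  define m where "m = length L"
  define s where "s j = L ! j" for j
  have finT: "finite T" unfolding T_def by simp
  have setL: "set L = T" unfolding L_def using finT by simp
  have sortL: "sorted_wrt (<) L" unfolding L_def by (rule strict_sorted_list_of_set)
  have distL: "distinct L" using sortL by (simp add: strict_sorted_iff)
  have mn: "m \<le> n"
  proof -
    have "m = card T" unfolding m_def using distinct_card[OF distL] setL by simp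
    also have "\<dots> \<le> card {..<n}" unfolding T_def by (rule card_image_le) simp
    finally show ?thesis by simp
  qed
  have spos: "0 < s j" if "j < m" for j
  proof -
    have "s j \<in> T" unfolding s_def using that setL m_def by (metis nth_mem)
    then show ?thesis unfolding T_def using assms(6) by auto
  qed
  have sinc: "s j < s (Suc j)" if "Suc j < m" for j
    unfolding s_def using sorted_wrt_nth_less[OF sortL, of j "Suc j"] that m_def by simp
  define \<sigma> where "\<sigma> i = (THE j. j < m \<and> s j = t i)" for i
  have \<sigma>: "\<sigma> i < m \<and> s (\<sigma> i) = t i" if i: "i < n" for i
  proof -
    have "t i \<in> set L" using setL i unfolding T_def by simp
    then obtain j where j: "j < m" "s j = t i" unfolding s_def m_def by (metis in_set_conv_nth)
    have "\<exists>!j. j < m \<and> s j = t i"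
    proof (rule ex1I[of _ j])
      show "j < m \<and> s j = t i" using j by simp
      fix j' assume "j' < m \<and> s j' = t i"
      then show "j' = j" using j distL unfolding s_def m_def by (metis nth_eq_iff_index_eq)
    qed
    then show ?thesis unfolding \<sigma>_def by (rule theI')
  qed
  define h where "h z = ennreal (f (\<lambda>i\<in>{..<n}. z (\<sigma> i)))" for z :: "nat \<Rightarrow> real^'d"
  have hm: "h \<in> borel_measurable (PiM {..<m} (\<lambda>_. borel :: (real^'d) measure))"
  proof -
    have "(\<lambda>z. \<lambda>i\<in>{..<n}. z (\<sigma> i)) \<in> measurable (PiM {..<m} (\<lambda>_. borel :: (real^'d) measure)) (PiM {..<n} (\<lambda>_. borel :: (real^'d) measure))"
    proof (rule measurable_restrict)
      fix i assume "i \<in> {..<n}"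
      then have "\<sigma> i \<in> {..<m}" using \<sigma> by auto
      then show "(\<lambda>z. z (\<sigma> i)) \<in> measurable (PiM {..<m} (\<lambda>_. borel :: (real^'d) measure)) borel"
        by (rule measurable_component_singleton)
    qed
    from measurable_comp[OF this fm] show ?thesis
      unfolding h_def by (simp add: comp_def)
  qed
  have eqX: "ennreal (f (\<lambda>i\<in>{..<n}. X (t i) \<omega>)) = h (\<lambda>j\<in>{..<m}. X (s j) \<omega>)" for \<omega>
  proof -
    have "(\<lambda>i\<in>{..<n}. X (t i) \<omega>) = (\<lambda>i\<in>{..<n}. (\<lambda>j\<in>{..<m}. X (s j) \<omega>) (\<sigma> i))"
      using \<sigma> by (auto simp: restrict_def fun_eq_iff)
    then show ?thesis unfolding h_def by simp
  qed
  have eqB: "ennreal (f (\<lambda>i\<in>{..<n}. B (\<kappa>2 * t i) \<omega>)) = h (\<lambda>j\<in>{..<m}. B (\<kappa>2 * s j) \<omega>)" for \<omega>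
  proof -
    have "(\<lambda>i\<in>{..<n}. B (\<kappa>2 * t i) \<omega>) = (\<lambda>i\<in>{..<n}. (\<lambda>j\<in>{..<m}. B (\<kappa>2 * s j) \<omega>) (\<sigma> i))"
      using \<sigma> by (auto simp: restrict_def fun_eq_iff)
    then show ?thesis unfolding h_def by simp
  qed
  have k1ge: "1 \<le> \<kappa>1" by (rule S.kappa1_ge1)
  have "(\<integral>\<^sup>+ \<omega>. ennreal (f (\<lambda>i\<in>{..<n}. X (t i) \<omega>)) \<partial>M) = (\<integral>\<^sup>+ \<omega>. h (\<lambda>j\<in>{..<m}. X (s j) \<omega>) \<partial>M)"
    by (simp only: eqX)
  also have "\<dots> \<le> ennreal \<kappa>1 ^ m * J x (\<lambda>j. \<kappa>2 * s j) m h"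
    by (rule S.chainX[where k=m and s=s and h=h, OF spos sinc hm])
  also have "\<dots> = ennreal \<kappa>1 ^ m * (\<integral>\<^sup>+ \<omega>. h (\<lambda>j\<in>{..<m}. B (\<kappa>2 * s j) \<omega>) \<partial>N)"
  proof -
    have "(\<integral>\<^sup>+ \<omega>. h (\<lambda>j\<in>{..<m}. B (\<kappa>2 * s j) \<omega>) \<partial>N) = J x (\<lambda>j. \<kappa>2 * s j) m h"
      by (rule S.chainB[OF _ _ hm]) (use spos sinc assms(3) in auto)
    then show ?thesis by simp
  qed
  also have "\<dots> \<le> ennreal \<kappa>1 ^ n * (\<integral>\<^sup>+ \<omega>. h (\<lambda>j\<in>{..<m}. B (\<kappa>2 * s j) \<omega>) \<partial>N)"
  proof (rule mult_right_mono)
    have "\<kappa>1 ^ m \<le> \<kappa>1 ^ n" by (rule power_increasing[OF mn k1ge])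
    then show "ennreal \<kappa>1 ^ m \<le> ennreal \<kappa>1 ^ n"
      using assms(2) by (simp add: ennreal_power ennreal_leI)
  qed simp
  also have "\<dots> = ennreal (\<kappa>1 ^ n) * (\<integral>\<^sup>+ \<omega>. ennreal (f (\<lambda>i\<in>{..<n}. B (\<kappa>2 * t i) \<omega>)) \<partial>N)"
    using assms(2) by (simp only: eqB ennreal_power less_imp_le)
  finally show ?thesis .
qed

end
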